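(* Let $\boldsymbol{m}=(m_1,m_2)\in\mathbb{N}^2$ and $g=\gcd(m_1,m_2)$. (a) $\displaystyle \mathcal{R}^{(\boldsymbol{m})}=\bigcup_{\rho=0}^{2g-1}\boldsymbol{\varrho}^{(\boldsymbol{m})}_{\rho/m_2}\big([0,2\pi)\big)$. (b) $\mathrm{LS}^{(\boldsymbol{m})}=\{\boldsymbol{x}(r,\theta)\in\mathbb{D}:\ T_{m_1}(r)^2=\cos^2(m_2\theta)\in\{0,1\}\}$, where $\boldsymbol{x}(r,\theta)=(r\cos\theta,r\sin\theta)$ with $r\in[0,1]$, $\theta\in\mathbb{R}$.
   Context: $\mathbb{D}=\{x\in\mathbb{R}^2:|x|\le1\}$. $T_n(r)=\cos(n\arccos r)$ is the Chebyshev polynomial of degree $n$, and $H_{m_2}(x_1,x_2)=\sum_{k=0}^{\lfloor m_2/2\rfloor}\binom{m_2}{2k}(-1)^kx_1^{m_2-2k}x_2^{2k}$ (so that $H_{m_2}(\cos\theta,\sin\theta)=\cos(m_2\theta)$). The rhodonea variety is $\mathcal{R}^{(\boldsymbol{m})}=\{x\in\mathbb{D}:\ (x_1^2+x_2^2)^{m_2}T_{m_1}(\sqrt{x_1^2+x_2^2})^2=H_{m_2}(x_1,x_2)^2\}$, equivalently, in polar coordinates, $\{\boldsymbol{x}(r,\theta)\in\mathbb{D}: T_{m_1}(r)^2=\cos^2(m_2\theta)\}$. Rhodonea curve: $\boldsymbol{\varrho}^{(\boldsymbol{m})}_\alpha(t)=\big(\cos(m_2t)\cos(m_1t-\alpha\pi),\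 \cos(m_2t)\sin(m_1t-\alpha\pi)\big)$. Nodal index set $\mathrm{I}^{(\boldsymbol{m})}=\{(i_1,i_2)\in\mathbb{Z}^2:\ 0\le i_1\le m_1,\ -2m_2<i_2\le 2m_2,\ i_2\le0\text{ if }i_1=m_1,\ i_1+i_2\text{ even}\}$; rhodonea nodes $\mathrm{LS}^{(\boldsymbol{m})}=\{(r_{i_1}\cos\theta_{i_2},r_{i_1}\sin\theta_{i_2}):\boldsymbol{i}\in\mathrm{I}^{(\boldsymbol{m})}\}$ with $r_{i_1}=\cos\!\big(\frac{i_1\pi}{2m_1}\big)$, $\theta_{i_2}=\frac{i_2\pi}{2m_2}$. *)

theory Defs
  imports "HOL-Analysis.Analysis"
begin

definition unit_disk :: "(real \<times> real) set" where
  "unit_disk = {(x1, x2). x1\<^sup>2 + x2\<^sup>2 \<le> 1}"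

definition cheb_T :: "nat \<Rightarrow> real \<Rightarrow> real" where
  "cheb_T n r = cos (real n * arccos r)"

text \<open>H_{m2}(x1,x2), with H_{m2}(cos t, sin t) = cos(m2 t).\<close>
definition harm_H :: "nat \<Rightarrow> real \<Rightarrow> real \<Rightarrow> real" where
  "harm_H m2 x1 x2 = (\<Sum>k = 0..m2 div 2.
      real (m2 choose (2 * k)) * (-1) ^ k * x1 ^ (m2 - 2 * k) * x2 ^ (2 * k))"

definition rhodonea_variety :: "nat \<Rightarrow> nat \<Rightarrow> (real \<times> real) set" where
  "rhodonea_variety m1 m2 = {(x1, x2). (x1, x2) \<in> unit_disk \<and>
      (x1\<^sup>2 + x2\<^sup>2) ^ m2 * (cheb_T m1 (sqrt (x1\<^sup>2 + x2\<^sup>2)))\<^sup>2 = (harm_H m2 x1 x2)\<^sup>2}"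

definition rhodonea_curve :: "nat \<Rightarrow> nat \<Rightarrow> real \<Rightarrow> real \<Rightarrow> real \<times> real" where
  "rhodonea_curve m1 m2 \<alpha> t =
     (cos (real m2 * t) * cos (real m1 * t - \<alpha> * pi),
      cos (real m2 * t) * sin (real m1 * t - \<alpha> * pi))"

definition nodal_index :: "nat \<Rightarrow> nat \<Rightarrow> (int \<times> int) set" where
  "nodal_index m1 m2 = {(i1, i2). 0 \<le> i1 \<and> i1 \<le> int m1 \<and>
      - 2 * int m2 < i2 \<and> i2 \<le> 2 * int m2 \<and>
      (i1 = int m1 \<longrightarrow> i2 \<le> 0) \<and> even (i1 + i2)}"

definition rhodonea_nodes :: "nat \<Rightarrow> nat \<Rightarrow> (real \<times> real) set" where
  "rhodonea_nodes m1 m2 =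
     (\<lambda>(i1, i2). (cos (real_of_int i1 * pi / (2 * real m1)) * cos (real_of_int i2 * pi / (2 * real m2)),
                  cos (real_of_int i1 * pi / (2 * real m1)) * sin (real_of_int i2 * pi / (2 * real m2))))
     ` nodal_index m1 m2"

definition polar_pt :: "real \<Rightarrow> real \<Rightarrow> real \<times> real" where
  "polar_pt r \<theta> = (r * cos \<theta>, r * sin \<theta>)"

end

theory Submission
  imports Defs
begin


lemma Re_ii_pow: "Re (\<i> ^ k) = (if even k then (-1) ^ (k div 2) else 0)"
proof -
  have "\<i> ^ k = (\<i>^2) ^ (k div 2) * \<i> ^ (k mod 2)"
    by (metis div_mult_mod_eq power_add power_mult mult.commute)
  also have "\<dots> = (-1) ^ (k div 2) * \<i> ^ (k mod 2)"
    by simp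
  finally show ?thesis
    by (cases "even k") (auto simp: odd_iff_mod_2_eq_one elim!: oddE)
qed

lemma harm_H_Re: "harm_H m x y = Re ((Complex x y) ^ m)"
proof -
  have c: "Complex x y = \<i> * of_real y + of_real x" by (simp add: complex_eq_iff)
  define f where "f k = real (m choose k) * Re (\<i> ^ k) * y ^ k * x ^ (m - k)" for k
  have "Re ((Complex x y) ^ m) = (\<Sum>k\<le>m. f k)"
    unfolding c binomial_ring f_def
    by (simp add: Re_sum power_mult_distrib mult.assoc flip: of_real_power)
  also have "\<dots> = (\<Sum>k\<in>(\<lambda>j. 2*j) ` {0..m div 2}. f k)"
    by (rule sum.mono_neutral_right) (auto simp: f_def Re_ii_pow)
  also have "\<dots> = (\<Sum>j=0..m div 2. f (2*j))"
    by (subst sum.reindex) (auto simp: inj_on_def)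
  also have "\<dots> = harm_H m x y"
    unfolding harm_H_def f_def by (intro sum.cong) (auto simp: Re_ii_pow)
  finally show ?thesis ..
qed

lemma harm_H_polar: "harm_H m (R * cos t) (R * sin t) = R ^ m * cos (real m * t)"
proof -
  have "Complex (R * cos t) (R * sin t) = rcis R t" by (simp add: complex_eq_iff)
  then show ?thesis by (simp add: harm_H_Re DeMoivre2)
qed



lemma cos2_eq_imp: assumes "(cos a)\<^sup>2 = (cos b)\<^sup>2"
  shows "\<exists>k::int. a = b + of_int k * pi \<or> a = - b + of_int k * pi"
proof -
  have "cos (2*a) = cos (2*b)" using assms by (simp add: cos_double_cos)
  have e1: "(2*a+2*b)/2 = a+b" "(2*b-2*a)/2 = b - a" by simp_all
  have "cos (2*a) - cos(2*b) = 2 * sin ((2*a + 2*b)/2) * sin ((2*b - 2*a)/2)" by (rule cos_diff_cos)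
  also have "\<dots> = 2 * sin (a+b) * sin (b-a)" by (simp only: e1)
  finally have "sin (a + b) = 0 \<or> sin (b - a) = 0" using \<open>cos (2*a) = cos (2*b)\<close> by simp
  then show ?thesis
  proof
    assume "sin (a+b) = 0"
    then obtain k::int where "a + b = of_int k * pi" by (auto simp: sin_zero_iff_int2)
    hence "a = - b + of_int k * pi" by simp
    thus ?thesis by blast
  next
    assume "sin (b - a) = 0"
    then obtain k::int where "b - a = of_int k * pi" by (auto simp: sin_zero_iff_int2)
    hence "a = b + of_int (-k) * pi" by simp
    thus ?thesis by blast
  qed
qed

lemma cos_shift_int: "cos (x + of_int j * pi) = cos x * cos (of_int j * pi)"
  by (simp add: cos_add mult.commute[of _ pi])

lemma sin_shift_int: "sin (x + of_int j * pi) = sin x * cos (of_int j * pi)"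
  by (simp add: sin_add mult.commute[of _ pi])

lemma cos_int_pi_sq: "(cos (of_int j * pi))\<^sup>2 = 1"
  by (simp add: mult.commute[of _ pi])

lemma cos2_shift_int: "(cos (x + of_int j * pi))\<^sup>2 = (cos x)\<^sup>2"
  by (simp add: cos_shift_int power_mult_distrib cos_int_pi_sq)

lemma cheb_T_cos: "cheb_T n (cos u) = cos (real n * u)"
proof -
  obtain k::int where k: "u = arccos (cos u) + 2*k*pi \<or> u = - arccos (cos u) + 2*k*pi"
    using cos_eq_arccos_Ex[of u "cos u"] by auto
  hence "arccos (cos u) = u - 2*k*pi \<or> arccos (cos u) = - u + 2*k*pi" by auto
  hence "real n * arccos (cos u) = real n * u + of_int (- (int n * k)) * (2*pi) \<or>
         real n * arccos (cos u) = - (real n * u) + of_int (int n * k) * (2*pi)"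
  proof
    assume h: "arccos (cos u) = u - 2*k*pi"
    have "real n * arccos (cos u) = real n * (u - 2*k*pi)" by (simp only: h)
    thus ?thesis by (intro disjI1) (simp add: algebra_simps)
  next
    assume h: "arccos (cos u) = - u + 2*k*pi"
    have "real n * arccos (cos u) = real n * (- u + 2*k*pi)" by (simp only: h)
    thus ?thesis by (intro disjI2) (simp add: algebra_simps)
  qed
  then show ?thesis unfolding cheb_T_def
    by (metis cos.plus_of_int cos_minus id_apply of_real_eq_id)
qed

lemma cos_quarter_sq: "(cos (of_int i * (pi/2)))\<^sup>2 = (if even i then 1 else 0)"
proof (cases "even i")
  case True
  then obtain a where "i = 2*a" by auto
  hence "of_int i * (pi/2) = of_int a * pi" by simp
  then show ?thesis using True cos_int_pi_sq by simp
next
  case False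
  hence "cos (of_int i * (pi/2)) = 0" using cos_zero_iff_int by blast
  then show ?thesis using False by simp
qed

lemma cos_sq_01: assumes "(cos x)\<^sup>2 \<in> {0,1}" shows "\<exists>i::int. x = of_int i * (pi/2)"
proof -
  have "(sin x)\<^sup>2 = 1 - (cos x)\<^sup>2" by (rule sin_squared_eq)
  hence "cos x = 0 \<or> sin x = 0" using assms by auto
  then show ?thesis using cos_zero_iff_int sin_zero_iff_int by blast
qed



lemma part_b:
  fixes m1 m2 :: nat
  assumes "m1 \<ge> 1" and "m2 \<ge> 1"
  shows "rhodonea_nodes m1 m2 =
           {polar_pt r \<theta> | r \<theta>. r \<in> {0..1} \<and> polar_pt r \<theta> \<in> unit_disk \<and>
              (cheb_T m1 r)\<^sup>2 = (cos (real m2 * \<theta>))\<^sup>2 \<and> (cos (real m2 * \<theta>))\<^sup>2 \<in> {0, 1}}"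
    (is "?L = ?R")
proof
  show "?L \<subseteq> ?R"
  proof
    fix p assume "p \<in> ?L"
    then obtain i1 i2 where I: "(i1, i2) \<in> nodal_index m1 m2" and
      p: "p = (cos (real_of_int i1 * pi / (2 * real m1)) * cos (real_of_int i2 * pi / (2 * real m2)),
                  cos (real_of_int i1 * pi / (2 * real m1)) * sin (real_of_int i2 * pi / (2 * real m2)))"
      unfolding rhodonea_nodes_def by auto
    from I have i: "0 \<le> i1" "i1 \<le> int m1" "even (i1 + i2)" unfolding nodal_index_def by auto
    define r where "r = cos (real_of_int i1 * pi / (2 * real m1))"
    define \<theta> where "\<theta> = real_of_int i2 * pi / (2 * real m2)"
    have pp: "p = polar_pt r \<theta>" unfolding p polar_pt_def r_def \<theta>_def by simp
    have a0: "0 \<le> real_of_int i1 * pi / (2 * real m1)" using i by simp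
    have a1: "real_of_int i1 * pi / (2 * real m1) \<le> pi/2"
    proof -
      have "real_of_int i1 \<le> real m1" using i by simp
      hence "real_of_int i1 * pi \<le> real m1 * pi" by (simp add: mult_right_mono)
      thus ?thesis using assms by (simp add: divide_simps)
    qed
    have r01: "r \<in> {0..1}" unfolding r_def using a0 a1 by (auto intro!: cos_ge_zero)
    have disk: "polar_pt r \<theta> \<in> unit_disk"
      unfolding unit_disk_def polar_pt_def using r01
      by (simp add: power_mult_distrib flip: distrib_left) (simp add: power_le_one)
    have T: "cheb_T m1 r = cos (of_int i1 * (pi/2))"
      unfolding r_def cheb_T_cos using assms by (simp add: field_simps)
    have C: "cos (real m2 * \<theta>) = cos (of_int i2 * (pi/2))"
      unfolding \<theta>_def using assms by (simp add: field_simps)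
    have par: "even i1 \<longleftrightarrow> even i2" using i(3) by auto
    have e1: "(cheb_T m1 r)\<^sup>2 = (cos (real m2 * \<theta>))\<^sup>2"
      unfolding T C cos_quarter_sq using par by simp
    have e2: "(cos (real m2 * \<theta>))\<^sup>2 \<in> {0,1}"
      unfolding C cos_quarter_sq by simp
    show "p \<in> ?R" unfolding pp using r01 disk e1 e2 by blast
  qed
next
  show "?R \<subseteq> ?L"
  proof
    fix p assume "p \<in> ?R"
    then obtain r \<theta> where p: "p = polar_pt r \<theta>" and r01: "r \<in> {0..1}" and
      eq: "(cheb_T m1 r)\<^sup>2 = (cos (real m2 * \<theta>))\<^sup>2" and c01: "(cos (real m2 * \<theta>))\<^sup>2 \<in> {0, 1}"
      by blast
    define u where "u = arccos r"
    have ru: "r = cos u" unfolding u_def using r01 by simp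
    have u0: "0 \<le> u" "u \<le> pi/2" unfolding u_def using r01 arccos_le_pi2[of r] by (auto intro: arccos_lbound)
    have Tu: "cheb_T m1 r = cos (real m1 * u)" unfolding cheb_T_def u_def ..
    obtain i1 :: int where i1: "real m1 * u = of_int i1 * (pi/2)"
      using cos_sq_01[of "real m1 * u"] eq c01 Tu by auto
    obtain j :: int where j: "real m2 * \<theta> = of_int j * (pi/2)"
      using cos_sq_01 c01 by blast
    have par: "even i1 \<longleftrightarrow> even j"
      using eq cos_quarter_sq[of i1] cos_quarter_sq[of j] i1 j Tu by (auto split: if_splits)
    have i1_0: "0 \<le> i1"
    proof -
      have "0 \<le> of_int i1 * (pi/2)" using i1 u0 by (metis mult_nonneg_nonneg of_nat_0_le_iff)
      thus ?thesis using pi_gt_zero zero_le_mult_iff[of "real_of_int i1" "pi/2"] by linarith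
    qed
    have i1_m: "i1 \<le> int m1"
    proof -
      have "of_int i1 * (pi/2) \<le> real m1 * (pi/2)" using i1 u0 by (metis mult_left_mono of_nat_0_le_iff)
      hence "real_of_int i1 \<le> real m1" by simp
      thus ?thesis by linarith
    qed
    have ru2: "r = cos (real_of_int i1 * pi / (2 * real m1))"
    proof -
      have "u = real_of_int i1 * pi / (2 * real m1)" using i1 assms by (simp add: field_simps)
      thus ?thesis using ru by simp
    qed
    define q where "q = (j + 2 * int m2 - 1) div (4 * int m2)"
    define i2 where "i2 = (j + 2 * int m2 - 1) mod (4 * int m2) - 2 * int m2 + 1"
    have jq0: "(j + 2*int m2 - 1) div (4*int m2) * (4*int m2) + (j + 2*int m2 - 1) mod (4*int m2) = j + 2*int m2 - 1"
      by (rule div_mult_mod_eq)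
    have jq: "j = i2 + 4 * int m2 * q" unfolding i2_def q_def using jq0 by (simp add: algebra_simps)
    have i2b: "- 2 * int m2 < i2" "i2 \<le> 2 * int m2"
    proof -
      have "4*int m2 > 0" using assms by simp
      hence "(j + 2*int m2 - 1) mod (4*int m2) < 4*int m2" "0 \<le> (j + 2*int m2 - 1) mod (4*int m2)"
        by (simp_all add: pos_mod_bound pos_mod_sign)
      thus "- 2 * int m2 < i2" "i2 \<le> 2 * int m2" unfolding i2_def by linarith+
    qed
    have par2: "even (i1 + i2)" using par jq by auto
    have th: "\<theta> = real_of_int i2 * pi / (2 * real m2) + of_int (q) * (2*pi)"
      using j assms unfolding jq by (simp add: field_simps)
    have cs: "cos \<theta> = cos (real_of_int i2 * pi / (2 * real m2))"
             "sin \<theta> = sin (real_of_int i2 * pi / (2 * real m2))"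
      unfolding th by (simp_all add: mult.commute[of _ "2*pi"] cos_add sin_add)
    show "p \<in> ?L"
    proof (cases "i1 = int m1 \<and> 0 < i2")
      case False
      hence "(i1, i2) \<in> nodal_index m1 m2" unfolding nodal_index_def
        using i1_0 i1_m i2b par2 by auto
      moreover have "p = (cos (real_of_int i1 * pi / (2 * real m1)) * cos (real_of_int i2 * pi / (2 * real m2)),
                  cos (real_of_int i1 * pi / (2 * real m1)) * sin (real_of_int i2 * pi / (2 * real m2)))"
        unfolding p polar_pt_def ru2[symmetric] cs ..
      ultimately show ?thesis unfolding rhodonea_nodes_def by force
    next
      case True
      hence "(i1, i2 - 2 * int m2) \<in> nodal_index m1 m2" unfolding nodal_index_def
        using i1_0 i1_m i2b par2 by auto
      moreover have "cos (real_of_int i1 * pi / (2 * real m1)) = 0"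
        using True assms by simp
      moreover have "r = 0" using ru2 calculation by simp
      ultimately show ?thesis unfolding rhodonea_nodes_def p polar_pt_def
        by (force intro!: image_eqI[where x="(i1, i2 - 2 * int m2)"])
    qed
  qed
qed



lemma nt_core:
  fixes m1 m2 :: nat and k :: int
  assumes "m1 \<ge> 1" "m2 \<ge> 1"
  shows "\<exists>j l \<rho>. \<rho> < 2 * gcd m1 m2 \<and> int \<rho> = (int m1 - int m2) * j - k - 2 * int m2 * l"
proof -
  define g where "g = gcd m1 m2"
  have gpos: "g > 0" using assms unfolding g_def by simp
  define d where "d = gcd (int m1 - int m2) (2 * int m2)"
  have d0: "d dvd (int m1 - int m2)" unfolding d_def by (rule gcd_dvd1)
  have d1: "d dvd 2 * (int m1 - int m2)" "d dvd 2 * int m2"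
  proof -
    show "d dvd 2 * (int m1 - int m2)" using d0 by (rule dvd_mult)
    show "d dvd 2 * int m2" unfolding d_def by (rule gcd_dvd2)
  qed
  have "d dvd 2 * int m1"
  proof -
    have "2 * int m1 = 2 * (int m1 - int m2) + 2 * int m2" by simp
    thus ?thesis using d1 by (metis dvd_add)
  qed
  hence "d dvd gcd (2 * int m1) (2 * int m2)" using d1 by simp
  also have "gcd (2 * int m1) (2 * int m2) = 2 * int g"
    unfolding g_def by (simp add: gcd_mult_distrib_int[symmetric])
  finally have dg: "d dvd 2 * int g" .
  define \<rho> where "\<rho> = nat ((- k) mod (2 * int g))"
  have r0: "0 \<le> (- k) mod (2 * int g)" "(- k) mod (2 * int g) < 2 * int g" using gpos by simp_all
  hence rho_lt: "\<rho> < 2 * g" unfolding \<rho>_def by linarith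
  have ri: "int \<rho> = (- k) mod (2 * int g)" unfolding \<rho>_def using r0 by simp
  have "(2 * int g) dvd ((- k) - (- k) mod (2 * int g))" by (rule dvd_minus_mod)
  hence "(2 * int g) dvd (int \<rho> + k)" unfolding ri
    by (metis dvd_minus_iff minus_diff_eq diff_minus_eq_add)
  hence "d dvd (int \<rho> + k)" using dg dvd_trans by blast
  then obtain w where w: "int \<rho> + k = d * w" by (auto elim: dvdE)
  obtain a b where ab: "a * (int m1 - int m2) + b * (2 * int m2) = d"
    unfolding d_def using bezout_int by blast
  have "int \<rho> = (int m1 - int m2) * (a * w) - k - 2 * int m2 * (- (b * w))"
    using w ab[symmetric] by (simp add: algebra_simps)
  thus ?thesis using rho_lt unfolding g_def by blast
qed

lemma nt_adj:
  fixes m1 m2 :: nat and k e :: int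
  assumes "m1 \<ge> 1" "m2 \<ge> 1"
  shows "\<exists>j l \<rho>. \<rho> < 2 * gcd m1 m2 \<and> int \<rho> = (int m1 - int m2) * j - k - 2 * int m2 * l
      \<and> e \<le> j \<and> j < 2 * int m2 + e"
proof -
  obtain j0 l \<rho> where h: "\<rho> < 2 * gcd m1 m2" "int \<rho> = (int m1 - int m2) * j0 - k - 2 * int m2 * l"
    using nt_core[OF assms] by blast
  define M where "M = 2 * int m2"
  have M: "M > 0" unfolding M_def using assms by simp
  define q where "q = (j0 - e) div M"
  define j where "j = (j0 - e) mod M + e"
  have jj: "j0 = j + M * q" unfolding j_def q_def by (simp add: algebra_simps)
  have jb: "e \<le> j" "j < M + e" unfolding j_def using M by (simp_all add: pos_mod_bound pos_mod_sign)
  have "int \<rho> = (int m1 - int m2) * j - k - 2 * int m2 * (l - (int m1 - int m2) * q)"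
    using h(2) unfolding jj M_def by (simp add: algebra_simps)
  thus ?thesis using h(1) jb unfolding M_def by blast
qed



lemma curve_in_variety:
  fixes m1 m2 :: nat and \<rho> :: nat and t :: real
  assumes "m2 \<ge> 1"
  shows "rhodonea_curve m1 m2 (real \<rho> / real m2) t \<in> rhodonea_variety m1 m2"
proof -
  define c where "c = cos (real m2 * t)"
  define \<phi> where "\<phi> = real m1 * t - real \<rho> / real m2 * pi"
  have p: "rhodonea_curve m1 m2 (real \<rho> / real m2) t = (c * cos \<phi>, c * sin \<phi>)"
    unfolding rhodonea_curve_def c_def \<phi>_def ..
  have n2: "(c * cos \<phi>)\<^sup>2 + (c * sin \<phi>)\<^sup>2 = c\<^sup>2"
    by (simp add: power_mult_distrib flip: distrib_left)
  have disk: "c\<^sup>2 \<le> 1" unfolding c_def by (simp add: cos_squared_eq)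
  have T: "(cheb_T m1 \<bar>c\<bar>)\<^sup>2 = (cos (real m1 * (real m2 * t)))\<^sup>2"
  proof (cases "c \<ge> 0")
    case True
    thus ?thesis unfolding c_def by (simp add: cheb_T_cos)
  next
    case False
    hence h: "\<bar>c\<bar> = cos (real m2 * t + of_int 1 * pi)" unfolding c_def by simp
    have "cheb_T m1 \<bar>c\<bar> = cos (real m1 * (real m2 * t + of_int 1 * pi))"
      by (simp only: h cheb_T_cos)
    also have "real m1 * (real m2 * t + of_int 1 * pi) = real m1 * (real m2 * t) + of_int (int m1) * pi"
      by (simp add: algebra_simps)
    finally have "cheb_T m1 \<bar>c\<bar> = cos (real m1 * (real m2 * t) + of_int (int m1) * pi)" .
    thus ?thesis by (simp only: cos2_shift_int)
  qed
  have "real m2 * \<phi> = real m1 * (real m2 * t) + of_int (- int \<rho>) * pi"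
    unfolding \<phi>_def using assms by (simp add: field_simps)
  hence C: "(cos (real m2 * \<phi>))\<^sup>2 = (cos (real m1 * (real m2 * t)))\<^sup>2"
    by (simp only: cos2_shift_int)
  have H: "harm_H m2 (c * cos \<phi>) (c * sin \<phi>) = c ^ m2 * cos (real m2 * \<phi>)"
    by (rule harm_H_polar)
  have "(c\<^sup>2) ^ m2 * (cheb_T m1 (sqrt (c\<^sup>2)))\<^sup>2 = (harm_H m2 (c * cos \<phi>) (c * sin \<phi>))\<^sup>2"
    unfolding H real_sqrt_abs T power_mult_distrib C by (simp add: power_mult[symmetric] mult.commute)
  note eq = this
  show ?thesis unfolding p rhodonea_variety_def unit_disk_def
    apply (simp only: mem_Collect_eq case_prod_conv n2)
    using disk eq by simp
qed



lemma variety_in_curves: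
  fixes m1 m2 :: nat
  assumes m: "m1 \<ge> 1" "m2 \<ge> 1" and x: "(x1, x2) \<in> rhodonea_variety m1 m2"
  shows "\<exists>\<rho>\<in>{0..<2 * gcd m1 m2}. \<exists>t\<in>{0..<2*pi}. (x1, x2) = rhodonea_curve m1 m2 (real \<rho> / real m2) t"
proof -
  have g0: "0 < 2 * gcd m1 m2" using m by simp
  define R where "R = sqrt (x1\<^sup>2 + x2\<^sup>2)"
  from x have disk: "x1\<^sup>2 + x2\<^sup>2 \<le> 1" and
    eq: "(x1\<^sup>2 + x2\<^sup>2) ^ m2 * (cheb_T m1 R)\<^sup>2 = (harm_H m2 x1 x2)\<^sup>2"
    unfolding rhodonea_variety_def unit_disk_def R_def by auto
  have R0: "0 \<le> R" and R1: "R \<le> 1" unfolding R_def using disk by auto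
  show ?thesis
  proof (cases "R = 0")
    case True
    hence xx: "x1 = 0" "x2 = 0" unfolding R_def by (auto simp: sum_power2_eq_zero_iff)
    define t where "t = pi / (2 * real m2)"
    have t: "t \<in> {0..<2*pi}" unfolding t_def using m by (auto simp: field_simps)
    have "cos (real m2 * t) = 0" unfolding t_def using m by simp
    hence "(x1, x2) = rhodonea_curve m1 m2 (real 0 / real m2) t" unfolding rhodonea_curve_def xx by simp
    note h = this
    show ?thesis
      apply (rule bexI[where x=0])
       apply (rule bexI[where x=t])
      using h t g0 by auto
  next
    case False
    hence Rp: "R > 0" using R0 by simp
    have R2: "R\<^sup>2 = x1\<^sup>2 + x2\<^sup>2" unfolding R_def by simp
    have "(x1/R)\<^sup>2 + (x2/R)\<^sup>2 = (x1\<^sup>2 + x2\<^sup>2) / R\<^sup>2"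
      by (simp add: power_divide add_divide_distrib)
    also have "\<dots> = R\<^sup>2 / R\<^sup>2" by (simp only: R2)
    also have "\<dots> = 1" using Rp by simp
    finally have "(x1/R)\<^sup>2 + (x2/R)\<^sup>2 = 1" .
    then obtain \<theta> where th: "x1/R = cos \<theta>" "x2/R = sin \<theta>" by (rule sincos_total_2pi) blast
    hence xth: "x1 = R * cos \<theta>" "x2 = R * sin \<theta>" using Rp by (auto simp: field_simps)
    have "(R\<^sup>2) ^ m2 * (cheb_T m1 R)\<^sup>2 = (R ^ m2 * cos (real m2 * \<theta>))\<^sup>2"
      using eq unfolding xth harm_H_polar R_def[symmetric] using R0
      by (simp add: power_mult_distrib flip: distrib_left)
    hence "(R ^ m2)\<^sup>2 * (cheb_T m1 R)\<^sup>2 = (R ^ m2)\<^sup>2 * (cos (real m2 * \<theta>))\<^sup>2"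
      by (simp add: power_mult_distrib power_mult[symmetric] mult.commute)
    hence TC: "(cheb_T m1 R)\<^sup>2 = (cos (real m2 * \<theta>))\<^sup>2" using Rp by simp
    define u where "u = arccos R"
    have Ru: "R = cos u" unfolding u_def using R0 R1 by simp
    have u0: "0 \<le> u" "u \<le> pi/2" unfolding u_def using R0 R1 arccos_le_pi2[of R] by (auto intro: arccos_lbound)
    have u1: "u < pi/2" using u0 Ru Rp by (metis cos_pi_half order_less_le less_irrefl)
    have Tu: "cheb_T m1 R = cos (real m1 * u)" unfolding cheb_T_def u_def ..
    obtain k :: int where "real m2 * \<theta> = real m1 * u + of_int k * pi \<or> real m2 * \<theta> = - (real m1 * u) + of_int k * pi"
      using cos2_eq_imp[of "real m2 * \<theta>" "real m1 * u"] TC Tu by auto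
    then obtain s where s: "real m2 * \<theta> = real m1 * s + of_int k * pi" "cos s = R" "\<bar>s\<bar> < pi/2"
    proof
      assume "real m2 * \<theta> = real m1 * u + of_int k * pi"
      thus ?thesis using that[of u] Ru u0 u1 by simp
    next
      assume "real m2 * \<theta> = - (real m1 * u) + of_int k * pi"
      thus ?thesis using that[of "-u"] Ru u0 u1 by simp
    qed
    define e :: int where "e = (if s \<ge> 0 then 0 else 1)"
    obtain j l \<rho> where jl: "\<rho> < 2 * gcd m1 m2" "int \<rho> = (int m1 - int m2) * j - k - 2 * int m2 * l"
      "e \<le> j" "j < 2 * int m2 + e"
      using nt_adj[OF m, of k e] by blast
    define t where "t = (s + of_int j * pi) / real m2"
    have m2t: "real m2 * t = s + of_int j * pi" unfolding t_def using m by simp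
    have t_range: "t \<in> {0..<2*pi}"
    proof -
      have "0 \<le> s + of_int j * pi \<and> s + of_int j * pi < real m2 * (2*pi)"
      proof (cases "s \<ge> 0")
        case True
        hence "0 \<le> j" "j \<le> 2 * int m2 - 1" using jl e_def by auto
        hence "0 \<le> real_of_int j" "real_of_int j \<le> 2 * real m2 - 1" by linarith+
        hence "0 \<le> of_int j * pi" "of_int j * pi \<le> (2 * real m2 - 1) * pi" 
          by (simp_all add: mult_right_mono)
        moreover have "(2 * real m2 - 1) * pi = real m2 * (2*pi) - pi" by (simp add: algebra_simps)
        moreover have "s < pi/2" using s(3) by auto
        ultimately show ?thesis using True by linarith
      next
        case False
        hence "1 \<le> j" "j \<le> 2 * int m2" using jl e_def by auto
        hence "1 \<le> real_of_int j" "real_of_int j \<le> 2 * real m2" by linarith+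
        hence "1 * pi \<le> of_int j * pi" "of_int j * pi \<le> (2 * real m2) * pi" 
          by (intro mult_right_mono; simp)+
        moreover have "(2 * real m2) * pi = real m2 * (2*pi)" by (simp add: algebra_simps)
        moreover have "-pi/2 < s" using s(3) by auto
        ultimately show ?thesis using False by linarith
      qed
      thus ?thesis unfolding t_def using m by (simp add: field_simps)
    qed
    define cj where "cj = cos (of_int j * pi)"
    have cj2: "cj * cj = 1" unfolding cj_def using cos_int_pi_sq[of j] by (simp add: power2_eq_square)
    have c1: "cos (real m2 * t) = R * cj" unfolding m2t cos_shift_int s(2) cj_def ..
    have jr: "real m1 * of_int j = of_int k + real \<rho> + real m2 * of_int j + 2 * real m2 * of_int l"
      using arg_cong[OF jl(2), of real_of_int] by (simp add: algebra_simps)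
    define \<phi> where "\<phi> = real m1 * t - real \<rho> / real m2 * pi"
    have "real m2 * \<phi> = real m1 * (real m2 * t) - real \<rho> * pi"
      unfolding \<phi>_def using m by (simp add: field_simps)
    also have "\<dots> = real m1 * s + real m1 * of_int j * pi - real \<rho> * pi"
      unfolding m2t by (simp add: algebra_simps)
    also have "\<dots> = real m1 * s + (of_int k + real \<rho> + real m2 * of_int j + 2 * real m2 * of_int l) * pi - real \<rho> * pi"
      by (simp only: jr)
    also have "real m1 * s + (of_int k + real \<rho> + real m2 * of_int j + 2 * real m2 * of_int l) * pi - real \<rho> * pi
       = (real m1 * s + of_int k * pi) + real m2 * (of_int (j + 2 * l) * pi)"
      by (simp add: algebra_simps)
    also have "\<dots> = real m2 * \<theta> + real m2 * (of_int (j + 2 * l) * pi)"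
      by (simp only: s(1))
    finally have "real m2 * \<phi> = real m2 * (\<theta> + of_int (j + 2 * l) * pi)"
      by (simp only: distrib_left)
    hence "\<phi> = \<theta> + of_int (j + 2 * l) * pi" using m by (simp only: mult_cancel_left) simp
    moreover have "cos (of_int (j + 2 * l) * pi) = cj" unfolding cj_def
      using cos_npi_int[of "j + 2*l"] cos_npi_int[of j] by (simp add: mult.commute)
    ultimately have cphi: "cos \<phi> = cos \<theta> * cj" "sin \<phi> = sin \<theta> * cj"
      by (simp_all only: cos_shift_int sin_shift_int)
    have "rhodonea_curve m1 m2 (real \<rho> / real m2) t = (x1, x2)"
      unfolding rhodonea_curve_def \<phi>_def[symmetric] c1 cphi xth
      using cj2 by (simp add: algebra_simps)
    note h = this
    show ?thesis
      apply (rule bexI[where x=\<rho>])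
       apply (rule bexI[where x=t])
      using h t_range jl(1) by auto
  qed
qed


theorem theorem4p1:
  fixes m1 m2 :: nat
  assumes "m1 \<ge> 1" and "m2 \<ge> 1"
  shows "rhodonea_variety m1 m2 =
           (\<Union>\<rho>\<in>{0..<2 * gcd m1 m2}. rhodonea_curve m1 m2 (real \<rho> / real m2) ` {0..<2 * pi})
         \<and> rhodonea_nodes m1 m2 =
           {polar_pt r \<theta> | r \<theta>. r \<in> {0..1} \<and> polar_pt r \<theta> \<in> unit_disk \<and>
              (cheb_T m1 r)\<^sup>2 = (cos (real m2 * \<theta>))\<^sup>2 \<and> (cos (real m2 * \<theta>))\<^sup>2 \<in> {0, 1}}"
proof (rule conjI)
  show "rhodonea_variety m1 m2 =
           (\<Union>\<rho>\<in>{0..<2 * gcd m1 m2}. rhodonea_curve m1 m2 (real \<rho> / real m2) ` {0..<2 * pi})"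
  proof
    show "rhodonea_variety m1 m2 \<subseteq> (\<Union>\<rho>\<in>{0..<2 * gcd m1 m2}. rhodonea_curve m1 m2 (real \<rho> / real m2) ` {0..<2 * pi})"
    proof
      fix p assume p: "p \<in> rhodonea_variety m1 m2"
      obtain x1 x2 where "p = (x1, x2)" by fastforce
      with variety_in_curves[OF assms] p show "p \<in> (\<Union>\<rho>\<in>{0..<2 * gcd m1 m2}. rhodonea_curve m1 m2 (real \<rho> / real m2) ` {0..<2 * pi})"
        by fastforce
    qed
    show "(\<Union>\<rho>\<in>{0..<2 * gcd m1 m2}. rhodonea_curve m1 m2 (real \<rho> / real m2) ` {0..<2 * pi}) \<subseteq> rhodonea_variety m1 m2"
      using curve_in_variety[OF assms(2)] by blast
  qed
  show "rhodonea_nodes m1 m2 =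
           {polar_pt r \<theta> | r \<theta>. r \<in> {0..1} \<and> polar_pt r \<theta> \<in> unit_disk \<and>
              (cheb_T m1 r)\<^sup>2 = (cos (real m2 * \<theta>))\<^sup>2 \<and> (cos (real m2 * \<theta>))\<^sup>2 \<in> {0, 1}}"
    by (rule part_b[OF assms])
qed

end
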